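(* If a Boolean function $f:\{0,1\}^n\to\{0,1\}$ has a nearest neighbor representation with $m$ prototypes, then it has a sign-representation over $\{1,2\}$ having $m$ terms (monomials).
   Context: A nearest neighbor representation of $f$ is a pair of disjoint sets $(P,N)$ of points of $\mathbb R^n$ (prototypes; their number is $|P\cup N|$) such that for every $a\in\{0,1\}^n$: if $f(a)=1$, there is $b\in P$ with $d(a,b)<d(a,c)$ for all $c\in N$; if $f(a)=0$, there is $b\in N$ with $d(a,b)<d(a,c)$ for all $c\in P$ ($d$ = Euclidean distance). Write $\tilde x_i=2^{x_i}$, a bijection $\{0,1\}\to\{1,2\}$. A multivariate polynomial $p(\tilde x_1,\dots,\tilde x_n)$ (with real coefficients and nonnegative integer exponents) is a sign-representation of $f$ over $\{1,2\}$ if for every $x\in\{0,1\}^n$, $p(2^{x_1},\dots,2^{x_n})\ge 0$ iff $f(x)=1$. The number of terms is the number of monomials of $p$. *)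

theory Defs
  imports "HOL-Analysis.Analysis"
begin

text \<open>Boolean inputs a in {0,1}^n are functions 'n => bool (n = CARD('n));
  they are embedded into R^n = real^'n as 0/1 vectors.\<close>
definition bvec :: "('n::finite \<Rightarrow> bool) \<Rightarrow> real^'n" where
  "bvec a = (\<chi> i. if a i then 1 else 0)"

definition nn_rep :: "(('n::finite \<Rightarrow> bool) \<Rightarrow> bool) \<Rightarrow> (real^'n) set \<Rightarrow> (real^'n) set \<Rightarrow> bool" where
  "nn_rep f P N \<longleftrightarrow> finite P \<and> finite N \<and> P \<inter> N = {} \<and>
     (\<forall>a. (f a \<longrightarrow> (\<exists>b\<in>P. \<forall>c\<in>N. dist (bvec a) b < dist (bvec a) c)) \<and>
          (\<not> f a \<longrightarrow> (\<exists>b\<in>N. \<forall>c\<in>P. dist (bvec a) b < dist (bvec a) c)))"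

text \<open>A multivariate real polynomial in variables indexed by 'n is given by its
  coefficient function on exponent vectors ('n => nat), with finite support.\<close>
definition mpoly_support :: "(('n::finite \<Rightarrow> nat) \<Rightarrow> real) \<Rightarrow> ('n \<Rightarrow> nat) set" where
  "mpoly_support c = {\<alpha>. c \<alpha> \<noteq> 0}"

definition mpoly_eval :: "(('n::finite \<Rightarrow> nat) \<Rightarrow> real) \<Rightarrow> ('n \<Rightarrow> real) \<Rightarrow> real" where
  "mpoly_eval c x = (\<Sum>\<alpha>\<in>mpoly_support c. c \<alpha> * (\<Prod>i\<in>UNIV. x i ^ \<alpha> i))"

definition num_terms :: "(('n::finite \<Rightarrow> nat) \<Rightarrow> real) \<Rightarrow> nat" where
  "num_terms c = card (mpoly_support c)"

text \<open>Sign-representation of f over {1,2}: evaluate at x~_i = 2^(x_i).\<close>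
definition sign_rep_12 :: "(('n::finite \<Rightarrow> bool) \<Rightarrow> bool) \<Rightarrow> (('n \<Rightarrow> nat) \<Rightarrow> real) \<Rightarrow> bool" where
  "sign_rep_12 f c \<longleftrightarrow> finite (mpoly_support c) \<and>
     (\<forall>a. mpoly_eval c (\<lambda>i. 2 ^ (if a i then 1 else 0)) \<ge> 0 \<longleftrightarrow> f a)"

end

theory Submission
  imports Defs
begin

lemma finite_uniform_pos:
  fixes Q :: "'a \<Rightarrow> real \<Rightarrow> bool"
  assumes "finite A" "\<forall>x\<in>A. \<exists>d>0. Q x d"
    and mono: "\<And>x d d'. Q x d \<Longrightarrow> 0 < d' \<Longrightarrow> d' \<le> d \<Longrightarrow> Q x d'"
  shows "\<exists>d>0. \<forall>x\<in>A. Q x d"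
  using assms(1,2)
proof (induction A rule: finite_induct)
  case empty then show ?case by (auto intro: exI[of _ 1])
next
  case (insert x F)
  then obtain d1 where d1: "d1>0" "\<forall>y\<in>F. Q y d1" by auto
  from insert obtain d2 where d2: "d2>0" "Q x d2" by auto
  have "\<forall>y\<in>insert x F. Q y (min d1 d2)"
    using d1 d2 mono[of _ d1 "min d1 d2"] mono[of _ d2 "min d1 d2"] by auto
  then show ?case using d1 d2 by (intro exI[of _ "min d1 d2"]) auto
qed

lemma dist_bvec_sq:
  "(dist (bvec a) p)^2 = (\<Sum>i\<in>UNIV. (if a i then 1 - 2 * p$i else 0) + (p$i)^2)"
proof -
  have "(dist (bvec a) p)^2 = (\<Sum>i\<in>UNIV. (bvec a $ i - p$i)^2)"
    by (simp add: dist_vec_def L2_set_def dist_real_def sum_nonneg)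
  then show ?thesis by (auto simp: bvec_def power2_eq_square algebra_simps intro!: sum.cong)
qed

lemma dominate:
  fixes A B :: "'b set" and h :: "'b \<Rightarrow> real"
  assumes "finite A" "finite B" "b \<in> A" "h b \<ge> Y - n" "\<forall>c\<in>B. h c \<le> Y - T"
    and "real (card B) < 2 powr (T - n)"
  shows "(\<Sum>c\<in>B. 2 powr h c) < (\<Sum>p\<in>A. 2 powr h p)"
proof -
  have "(\<Sum>c\<in>B. 2 powr h c) \<le> (\<Sum>c\<in>B. 2 powr (Y - T))"
    using assms(5) by (intro sum_mono) auto
  also have "\<dots> = real (card B) * 2 powr (Y - T)" by simp
  also have "2 powr (Y - T) = 2 powr (Y - n) / 2 powr (T - n)"
    by (simp add: powr_diff[symmetric])
  also have "real (card B) * (2 powr (Y - n) / 2 powr (T - n)) < 2 powr (Y - n)"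
  proof -
    have "real (card B) / 2 powr (T - n) < 1" using assms(6) by simp
    then have "real (card B) / 2 powr (T - n) * 2 powr (Y - n) < 1 * 2 powr (Y - n)"
      by (intro mult_strict_right_mono) auto
    then show ?thesis by simp
  qed
  also have "2 powr (Y - n) \<le> 2 powr h b" using assms(4) by simp
  also have "\<dots> \<le> (\<Sum>p\<in>A. 2 powr h p)"
    using assms(1,3) by (intro member_le_sum) auto
  finally show ?thesis .
qed

lemma floor_eq_close:
  assumes "\<lfloor>x::real\<rfloor> = \<lfloor>y\<rfloor>" shows "\<bar>x - y\<bar> < 1"
proof -
  have a: "real_of_int \<lfloor>y\<rfloor> = real_of_int \<lfloor>x\<rfloor>" using assms by simp
  show ?thesis unfolding abs_less_iff using floor_correct[of x] floor_correct[of y] a by linarith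
qed

theorem lemma7:
  fixes f :: "('n::finite \<Rightarrow> bool) \<Rightarrow> bool"
    and P N :: "(real^'n) set" and m :: nat
  assumes "nn_rep f P N" and "card (P \<union> N) = m"
  shows "\<exists>c. sign_rep_12 f c \<and> num_terms c = m"
proof -
  define S where "S = P \<union> N"
  define n where "n = CARD('n)"
  have finP: "finite P" and finN: "finite N" and disj: "P \<inter> N = {}"
    and nnP: "\<And>a. f a \<Longrightarrow> \<exists>b\<in>P. \<forall>c\<in>N. dist (bvec a) b < dist (bvec a) c"
    and nnN: "\<And>a. \<not> f a \<Longrightarrow> \<exists>b\<in>N. \<forall>c\<in>P. dist (bvec a) b < dist (bvec a) c"
    using assms(1) unfolding nn_rep_def by auto
  have finS: "finite S" using finP finN S_def by auto
  have cardS: "card S = m" using assms(2) S_def by simp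
  have cardP: "card P \<le> m" using assms(2) finP finN by (metis card_mono finite_UnI sup_ge1)
  have cardN: "card N \<le> m" using assms(2) finP finN by (metis card_mono finite_UnI sup_ge2)
  have gap1: "\<exists>d>0. \<forall>c\<in>B. dist (bvec a) b ^ 2 + d \<le> dist (bvec a) c ^ 2"
    if "finite B" "\<forall>c\<in>B. dist (bvec a) b < dist (bvec a) c" for B a b
  proof (rule finite_uniform_pos[OF that(1)])
    show "\<forall>c\<in>B. \<exists>d>0. dist (bvec a) b ^ 2 + d \<le> dist (bvec a) c ^ 2"
    proof
      fix c assume "c \<in> B"
      then have "dist (bvec a) b ^ 2 < dist (bvec a) c ^ 2"
        using that(2) by (intro power_strict_mono) auto
      then show "\<exists>d>0. dist (bvec a) b ^ 2 + d \<le> dist (bvec a) c ^ 2"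
        by (intro exI[of _ "dist (bvec a) c ^ 2 - dist (bvec a) b ^ 2"]) auto
    qed
  qed auto
  define Qd where "Qd = (\<lambda>a d. (f a \<longrightarrow> (\<exists>b\<in>P. \<forall>c\<in>N. dist (bvec a) b ^ 2 + d \<le> dist (bvec a) c ^ 2))
      \<and> (\<not> f a \<longrightarrow> (\<exists>b\<in>N. \<forall>c\<in>P. dist (bvec a) b ^ 2 + d \<le> dist (bvec a) c ^ 2)))"
  have "\<exists>d>0. \<forall>a\<in>UNIV. Qd a d"
  proof (rule finite_uniform_pos)
    show "\<forall>a\<in>UNIV. \<exists>d>0. Qd a d"
    proof
      fix a :: "'n \<Rightarrow> bool"
      show "\<exists>d>0. Qd a d"
      proof (cases "f a")
        case True
        then obtain b where "b \<in> P" "\<forall>c\<in>N. dist (bvec a) b < dist (bvec a) c" using nnP by blast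
        with gap1[OF finN] obtain d where "d > 0" "\<forall>c\<in>N. dist (bvec a) b ^ 2 + d \<le> dist (bvec a) c ^ 2"
          by blast
        then show ?thesis using True \<open>b \<in> P\<close> unfolding Qd_def by blast
      next
        case False
        then obtain b where "b \<in> N" "\<forall>c\<in>P. dist (bvec a) b < dist (bvec a) c" using nnN by blast
        with gap1[OF finP] obtain d where "d > 0" "\<forall>c\<in>P. dist (bvec a) b ^ 2 + d \<le> dist (bvec a) c ^ 2"
          by blast
        then show ?thesis using False \<open>b \<in> N\<close> unfolding Qd_def by blast
      qed
    qed
  next
    fix a d d' assume "Qd a d" "0 < d'" "d' \<le> (d::real)"
    then show "Qd a d'" unfolding Qd_def by (meson add_left_mono order_trans)
  qed simp
  then obtain \<delta> where dpos: "\<delta> > 0" and dgap: "\<And>a. Qd a \<delta>" by blast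
  define Qe where "Qe = (\<lambda>(pq::(real^'n) \<times> (real^'n)) (e::real). fst pq \<noteq> snd pq \<longrightarrow> (\<exists>i. e \<le> \<bar>fst pq $ i - snd pq $ i\<bar>))"
  have "\<exists>e>0. \<forall>pq\<in>S \<times> S. Qe pq e"
  proof (rule finite_uniform_pos)
    show "\<forall>pq\<in>S \<times> S. \<exists>e>0. Qe pq e"
    proof
      fix pq :: "(real^'n) \<times> (real^'n)"
      show "\<exists>e>0. Qe pq e"
      proof (cases "fst pq = snd pq")
        case True then show ?thesis unfolding Qe_def by (auto intro: exI[of _ 1])
      next
        case False
        then obtain i where "fst pq $ i \<noteq> snd pq $ i" by (metis vec_eq_iff)
        then show ?thesis unfolding Qe_def
          by (intro exI[of _ "\<bar>fst pq $ i - snd pq $ i\<bar>"]) auto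
      qed
    qed
  next
    fix pq e e' assume "Qe pq e" "0 < e'" "e' \<le> (e::real)"
    then show "Qe pq e'" unfolding Qe_def by (meson order_trans)
  qed (use finS in simp)
  then obtain \<eta> where epos: "\<eta> > 0" and esep: "\<And>p q. p \<in> S \<Longrightarrow> q \<in> S \<Longrightarrow> p \<noteq> q \<Longrightarrow> \<exists>i. \<eta> \<le> \<bar>p $ i - q $ i\<bar>"
    unfolding Qe_def by force
  define t where "t = (real m + real n) / \<delta> + 1 / \<eta>"
  have tpos: "t > 0" using dpos epos unfolding t_def by (simp add: add_nonneg_pos)
  have tdelta': "t * \<delta> = (real m + real n) + \<delta> / \<eta>"
    unfolding t_def using dpos by (simp add: field_simps)
  have tdelta: "t * \<delta> \<ge> real m + real n"
    unfolding tdelta' using dpos epos by simp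
  have teta': "t * \<eta> = (real m + real n) * \<eta> / \<delta> + 1"
    unfolding t_def using epos by (simp add: field_simps)
  have teta: "t * \<eta> \<ge> 1"
    unfolding teta' using dpos epos by simp
  define \<beta> where "\<beta> = (\<lambda>(p::real^'n) i. \<lfloor>t * (2 * p $ i - 1)\<rfloor>)"
  have \<beta>_inj: "p = q" if pq: "p \<in> S" "q \<in> S" "\<beta> p = \<beta> q" for p q
  proof (rule ccontr)
    assume "p \<noteq> q"
    then obtain i where i: "\<eta> \<le> \<bar>p $ i - q $ i\<bar>" using esep pq by blast
    have "\<bar>t * (2 * p $ i - 1) - t * (2 * q $ i - 1)\<bar> < 1"
    proof (rule floor_eq_close)
      have "\<beta> p i = \<beta> q i" using pq(3) by simp
      then show "\<lfloor>t * (2 * p $ i - 1)\<rfloor> = \<lfloor>t * (2 * q $ i - 1)\<rfloor>" unfolding \<beta>_def .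
    qed
    moreover have "\<bar>t * (2 * p $ i - 1) - t * (2 * q $ i - 1)\<bar> = 2 * t * \<bar>p $ i - q $ i\<bar>"
    proof -
      have "t * (2 * p $ i - 1) - t * (2 * q $ i - 1) = (2 * t) * (p $ i - q $ i)"
        by (simp add: algebra_simps)
      then show ?thesis using tpos by (simp add: abs_mult)
    qed
    moreover have "t * \<eta> \<le> t * \<bar>p $ i - q $ i\<bar>" using i tpos by simp
    ultimately show False using teta by linarith
  qed

  define M where "M = (\<Sum>p\<in>S. \<Sum>i\<in>UNIV. \<bar>\<beta> p i\<bar>)"
  have Mge: "\<beta> p i + M \<ge> 0" if "p \<in> S" for p i
  proof -
    have "\<bar>\<beta> p i\<bar> \<le> (\<Sum>i\<in>UNIV. \<bar>\<beta> p i\<bar>)" by (rule member_le_sum) auto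
    also have "\<dots> \<le> M" unfolding M_def using that finS
      by (intro member_le_sum[where f="\<lambda>p. \<Sum>i\<in>UNIV. \<bar>\<beta> p i\<bar>"]) (auto intro: sum_nonneg)
    finally show ?thesis by linarith
  qed
  define \<alpha> where "\<alpha> = (\<lambda>p i. nat (\<beta> p i + M))"
  have \<alpha>_real: "real (\<alpha> p i) = real_of_int (\<beta> p i) + real_of_int M" if "p \<in> S" for p i
    using Mge[OF that, of i] unfolding \<alpha>_def by simp
  have \<alpha>_inj: "inj_on \<alpha> S"
  proof (rule inj_onI)
    fix p q assume pq: "p \<in> S" "q \<in> S" "\<alpha> p = \<alpha> q"
    have "\<beta> p = \<beta> q"
    proof
      fix i
      have "nat (\<beta> p i + M) = nat (\<beta> q i + M)" using pq(3) unfolding \<alpha>_def by meson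
      then show "\<beta> p i = \<beta> q i" using Mge[OF pq(1), of i] Mge[OF pq(2), of i] by simp
    qed
    then show "p = q" using \<beta>_inj pq by blast
  qed
  define w where "w = (\<lambda>p::real^'n. 2 powr (- t * (\<Sum>i\<in>UNIV. (p $ i)^2)))"
  define s where "s = (\<lambda>p. if p \<in> P then 1 else (-1::real))"
  define c where "c = (\<lambda>\<gamma>. \<Sum>p\<in>S. if \<alpha> p = \<gamma> then s p * w p else 0)"
  have c_alpha: "c (\<alpha> p) = s p * w p" if "p \<in> S" for p
  proof -
    have "c (\<alpha> p) = (\<Sum>q\<in>S. if q = p then s q * w q else 0)"
      unfolding c_def using \<alpha>_inj that by (intro sum.cong) (auto dest: inj_onD)
    also have "\<dots> = s p * w p" using finS that by simp
    finally show ?thesis .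
  qed
  have supp: "mpoly_support c = \<alpha> ` S"
  proof
    show "mpoly_support c \<subseteq> \<alpha> ` S"
    proof
      fix \<gamma> assume "\<gamma> \<in> mpoly_support c"
      then have "c \<gamma> \<noteq> 0" unfolding mpoly_support_def by simp
      have "\<exists>p\<in>S. \<alpha> p = \<gamma>"
      proof (rule ccontr)
        assume "\<not> (\<exists>p\<in>S. \<alpha> p = \<gamma>)"
        then have "c \<gamma> = 0" unfolding c_def by (intro sum.neutral) auto
        with \<open>c \<gamma> \<noteq> 0\<close> show False by simp
      qed
      then show "\<gamma> \<in> \<alpha> ` S" by blast
    qed
    show "\<alpha> ` S \<subseteq> mpoly_support c"
      using c_alpha unfolding mpoly_support_def s_def w_def by (auto split: if_splits)
  qed
  have nt: "num_terms c = m"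
    unfolding num_terms_def supp using card_image[OF \<alpha>_inj] cardS by simp

  define ind where "ind = (\<lambda>(a::'n \<Rightarrow> bool) i. if a i then 1 else (0::real))"
  define H where "H = (\<lambda>a p. (\<Sum>i\<in>UNIV. ind a i * real (\<alpha> p i)) - t * (\<Sum>i\<in>UNIV. (p $ i)^2))"
  have eval: "mpoly_eval c (\<lambda>i. 2 ^ (if a i then 1 else 0)) = (\<Sum>p\<in>P. 2 powr H a p) - (\<Sum>p\<in>N. 2 powr H a p)"
    for a
  proof -
    define x where "x = (\<lambda>i. (2::real) ^ (if a i then 1 else 0))"
    have termeq: "w p * (\<Prod>i\<in>UNIV. x i ^ \<alpha> p i) = 2 powr H a p" for p
    proof -
      have "(\<Prod>i\<in>UNIV. x i ^ \<alpha> p i) = (\<Prod>i\<in>UNIV. 2 powr (ind a i * real (\<alpha> p i)))"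
        by (intro prod.cong) (auto simp: x_def ind_def powr_realpow)
      also have "\<dots> = 2 powr (\<Sum>i\<in>UNIV. ind a i * real (\<alpha> p i))"
        by (simp add: powr_sum)
      finally show ?thesis unfolding w_def H_def by (simp add: powr_add[symmetric])
    qed
    have "mpoly_eval c x = (\<Sum>\<gamma>\<in>\<alpha> ` S. c \<gamma> * (\<Prod>i\<in>UNIV. x i ^ \<gamma> i))"
      unfolding mpoly_eval_def supp ..
    also have "\<dots> = (\<Sum>p\<in>S. c (\<alpha> p) * (\<Prod>i\<in>UNIV. x i ^ \<alpha> p i))"
      by (simp add: sum.reindex[OF \<alpha>_inj])
    also have "\<dots> = (\<Sum>p\<in>S. s p * 2 powr H a p)"
      by (intro sum.cong) (auto simp: c_alpha termeq[symmetric])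
    also have "\<dots> = (\<Sum>p\<in>P. s p * 2 powr H a p) + (\<Sum>p\<in>N. s p * 2 powr H a p)"
      unfolding S_def using finP finN disj by (rule sum.union_disjoint)
    also have "(\<Sum>p\<in>P. s p * 2 powr H a p) = (\<Sum>p\<in>P. 2 powr H a p)"
      by (intro sum.cong) (auto simp: s_def)
    also have "(\<Sum>p\<in>N. s p * 2 powr H a p) = - (\<Sum>p\<in>N. 2 powr H a p)"
      using disj by (auto simp: s_def sum_negf[symmetric] intro!: sum.cong)
    finally show ?thesis unfolding x_def by simp
  qed
  define K where "K = (\<lambda>a. real_of_int M * (\<Sum>i\<in>UNIV. ind a i))"
  have Hbounds: "K a - t * dist (bvec a) p ^ 2 - real n \<le> H a p \<and> H a p \<le> K a - t * dist (bvec a) p ^ 2"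
    if "p \<in> S" for a p
  proof -
    define y where "y = (\<lambda>i. t * (2 * p $ i - 1))"
    have "H a p - K a + t * dist (bvec a) p ^ 2 =
      (\<Sum>i\<in>UNIV. ind a i * (real (\<alpha> p i)) - t * (p $ i)^2 - real_of_int M * ind a i
          + t * ((if a i then 1 - 2 * p $ i else 0) + (p $ i)^2))"
      unfolding H_def K_def dist_bvec_sq
      by (simp add: sum.distrib sum_subtractf sum_distrib_left distrib_left)
    also have "\<dots> = (\<Sum>i\<in>UNIV. ind a i * (real_of_int (\<beta> p i) - y i))"
      by (intro sum.cong) (auto simp: ind_def \<alpha>_real[OF that] y_def algebra_simps)
    finally have eq: "H a p - K a + t * dist (bvec a) p ^ 2 = (\<Sum>i\<in>UNIV. ind a i * (real_of_int (\<beta> p i) - y i))" .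
    have fl1: "real_of_int \<lfloor>z\<rfloor> \<le> z" for z :: real by (rule of_int_floor_le)
    have fl2: "z < real_of_int \<lfloor>z\<rfloor> + 1" for z :: real by (rule real_of_int_floor_add_one_gt)
    have b0: "ind a i * (real_of_int (\<beta> p i) - y i) = (if a i then real_of_int \<lfloor>y i\<rfloor> - y i else 0)" for i
      unfolding ind_def \<beta>_def y_def by simp
    have b1: "- 1 \<le> ind a i * (real_of_int (\<beta> p i) - y i)" for i
      unfolding b0 using fl2[of "y i"] by (cases "a i") (simp only: if_True if_False; linarith)+
    have b2: "ind a i * (real_of_int (\<beta> p i) - y i) \<le> 0" for i
      unfolding b0 using fl1[of "y i"] by (cases "a i") (simp only: if_True if_False; linarith)+
    have "(\<Sum>i\<in>UNIV. ind a i * (real_of_int (\<beta> p i) - y i)) \<ge> (\<Sum>i\<in>(UNIV::'n set). - 1)"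
      using b1 by (intro sum_mono) auto
    then have s1: "(\<Sum>i\<in>UNIV. ind a i * (real_of_int (\<beta> p i) - y i)) \<ge> - real n"
      unfolding n_def by simp
    have s2: "(\<Sum>i\<in>UNIV. ind a i * (real_of_int (\<beta> p i) - y i)) \<le> 0"
      using b2 by (intro sum_nonpos) auto
    show ?thesis using eq s1 s2 by linarith
  qed
  have big: "real k < 2 powr (t * \<delta> - real n)" if "k \<le> m" for k
  proof -
    have "real k < 2 ^ m" using that less_exp[of m]
      by (metis le_less_trans of_nat_less_iff of_nat_numeral of_nat_power)
    also have "(2::real) ^ m = 2 powr real m" by (simp add: powr_realpow)
    also have "\<dots> \<le> 2 powr (t * \<delta> - real n)" using tdelta by simp
    finally show ?thesis .
  qed
  have sign: "mpoly_eval c (\<lambda>i. 2 ^ (if a i then 1 else 0)) \<ge> 0 \<longleftrightarrow> f a" for a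
  proof (cases "f a")
    case True
    then obtain b where b: "b \<in> P" "\<forall>c\<in>N. dist (bvec a) b ^ 2 + \<delta> \<le> dist (bvec a) c ^ 2"
      using dgap[of a] unfolding Qd_def by blast
    have "(\<Sum>p\<in>N. 2 powr H a p) < (\<Sum>p\<in>P. 2 powr H a p)"
    proof (rule dominate[OF finP finN b(1)])
      show "H a b \<ge> (K a - t * dist (bvec a) b ^ 2) - real n"
        using Hbounds[of b a] b(1) S_def by auto
      show "\<forall>c\<in>N. H a c \<le> (K a - t * dist (bvec a) b ^ 2) - t * \<delta>"
      proof
        fix q assume q: "q \<in> N"
        have "H a q \<le> K a - t * dist (bvec a) q ^ 2" using Hbounds[of q a] q S_def by auto
        moreover have "t * (dist (bvec a) b ^ 2 + \<delta>) \<le> t * dist (bvec a) q ^ 2"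
          using b(2) q tpos by (intro mult_left_mono) auto
        ultimately show "H a q \<le> (K a - t * dist (bvec a) b ^ 2) - t * \<delta>"
          by (simp add: algebra_simps)
      qed
      show "real (card N) < 2 powr (t * \<delta> - real n)" using big cardN by simp
    qed
    then show ?thesis using True eval[of a] by simp
  next
    case False
    then obtain b where b: "b \<in> N" "\<forall>c\<in>P. dist (bvec a) b ^ 2 + \<delta> \<le> dist (bvec a) c ^ 2"
      using dgap[of a] unfolding Qd_def by blast
    have "(\<Sum>p\<in>P. 2 powr H a p) < (\<Sum>p\<in>N. 2 powr H a p)"
    proof (rule dominate[OF finN finP b(1)])
      show "H a b \<ge> (K a - t * dist (bvec a) b ^ 2) - real n"
        using Hbounds[of b a] b(1) S_def by auto
      show "\<forall>c\<in>P. H a c \<le> (K a - t * dist (bvec a) b ^ 2) - t * \<delta>"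
      proof
        fix q assume q: "q \<in> P"
        have "H a q \<le> K a - t * dist (bvec a) q ^ 2" using Hbounds[of q a] q S_def by auto
        moreover have "t * (dist (bvec a) b ^ 2 + \<delta>) \<le> t * dist (bvec a) q ^ 2"
          using b(2) q tpos by (intro mult_left_mono) auto
        ultimately show "H a q \<le> (K a - t * dist (bvec a) b ^ 2) - t * \<delta>"
          by (simp add: algebra_simps)
      qed
      show "real (card P) < 2 powr (t * \<delta> - real n)" using big cardP by simp
    qed
    then show ?thesis using False eval[of a] by simp
  qed
  have "sign_rep_12 f c"
    unfolding sign_rep_12_def using sign supp finS by simp
  then show ?thesis using nt by blast
qed

end
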